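(* Let $\mathcal{R}=(W,\unlhd)$ be a poset regarded as a category and consider the presheaf topos $\mathbf{Set}^{\mathcal{R}}$, whose subobject classifier satisfies $\Omega(w)=\{A\cap\uparrow\! w\mid A\subseteq W\text{ upward closed}\}$ with $\uparrow\! w=\{v\mid w\unlhd v\}$. Let $\odot:\Omega\to\Omega$ be the interpretation of $p{:}\Omega\vdash\divideontimes p{:}\Omega$, where $\divideontimes p:=\forall t{:}\Omega.(t\vee(t\Rightarrow p))$. Then for every $w\in W$ and every $A\in\Omega(w)$, $$\odot_w(A)=\{z\in W\mid w\unlhd z\text{ and }\uparrow\! z\setminus\{z\}\subseteq A\}.$$
   Context: $\mathbf{Set}^{\mathcal{R}}$ denotes covariant functors from $\mathcal{R}$ to $\mathbf{Set}$; $\divideontimes$ is expressed in the Mitchell–Bénabou internal language of the topos. *)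

theory Defs
  imports Main
begin

definition is_poset :: "('w \<Rightarrow> 'w \<Rightarrow> bool) \<Rightarrow> bool" where
  "is_poset le \<longleftrightarrow> reflp le \<and> transp le \<and> antisymp le"

definition up :: "('w \<Rightarrow> 'w \<Rightarrow> bool) \<Rightarrow> 'w \<Rightarrow> 'w set" where
  "up le w = {v. le w v}"

definition upclosed :: "('w \<Rightarrow> 'w \<Rightarrow> bool) \<Rightarrow> 'w set \<Rightarrow> bool" where
  "upclosed le A \<longleftrightarrow> (\<forall>x y. x \<in> A \<longrightarrow> le x y \<longrightarrow> y \<in> A)"

text \<open>Subobject classifier of Set^R: Omega(w) = {A \<inter> \<up>w | A upward closed};
  restriction along w \<unlhd> v is intersection with \<up>v.\<close>

definition Omega :: "('w \<Rightarrow> 'w \<Rightarrow> bool) \<Rightarrow> 'w \<Rightarrow> 'w set set" where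
  "Omega le w = {A \<inter> up le w | A. upclosed le A}"

text \<open>The fragment of the Mitchell--Benabou language needed: formulas built from
  variables of type Omega (regarded as formulas), disjunction, implication and universal
  quantification over Omega.\<close>

datatype form = OVar nat | Disj form form | Impl form form | AllO nat form

text \<open>Kripke--Joyal forcing in the presheaf topos Set^R; an environment assigns to each
  variable an element of Omega at the current stage.\<close>

fun forces :: "('w \<Rightarrow> 'w \<Rightarrow> bool) \<Rightarrow> 'w \<Rightarrow> (nat \<Rightarrow> 'w set) \<Rightarrow> form \<Rightarrow> bool" where
  "forces le w env (OVar i) = (w \<in> env i)"
| "forces le w env (Disj \<phi> \<psi>) = (forces le w env \<phi> \<or> forces le w env \<psi>)"
| "forces le w env (Impl \<phi> \<psi>) =
     (\<forall>v. le w v \<longrightarrow> forces le v (\<lambda>i. env i \<inter> up le v) \<phi>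
                      \<longrightarrow> forces le v (\<lambda>i. env i \<inter> up le v) \<psi>)"
| "forces le w env (AllO j \<phi>) =
     (\<forall>v. le w v \<longrightarrow> (\<forall>T \<in> Omega le v. forces le v ((\<lambda>i. env i \<inter> up le v)(j := T)) \<phi>))"

text \<open>Interpretation of a formula p:Omega |- phi : Omega (free variable p = variable 0)
  as a natural transformation Omega \<rightarrow> Omega: at stage w it sends A \<in> Omega(w) to the
  sieve of stages z \<unrhd> w at which phi is forced with p := A restricted to z.\<close>

definition interp :: "('w \<Rightarrow> 'w \<Rightarrow> bool) \<Rightarrow> form \<Rightarrow> 'w \<Rightarrow> 'w set \<Rightarrow> 'w set" where
  "interp le \<phi> w A = {z. le w z \<and> forces le z (\<lambda>_. A \<inter> up le z) \<phi>}"

text \<open>divideontimes p := \<forall>t:Omega. (t \<or> (t \<Rightarrow> p)), with p = variable 0, t = variable 1.\<close>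

definition divstar :: form where
  "divstar = AllO 1 (Disj (OVar 1) (Impl (OVar 1) (OVar 0)))"

definition odot :: "('w \<Rightarrow> 'w \<Rightarrow> bool) \<Rightarrow> 'w \<Rightarrow> 'w set \<Rightarrow> 'w set" where
  "odot le w A = interp le divstar w A"

end

theory Submission
  imports Defs
begin

lemma odot_char:
  assumes "is_poset le"
  shows "z \<in> odot le w A \<longleftrightarrow> le w z \<and> (\<forall>v. le z v \<longrightarrow> (\<forall>T\<in>Omega le v. v \<in> T \<or>
      (\<forall>u. le v u \<longrightarrow> u \<in> T \<longrightarrow> u \<in> A)))"
proof -
  have tr: "\<And>x y z. le x y \<Longrightarrow> le y z \<Longrightarrow> le x z"
    and rf: "\<And>x. le x x"
    using assms(1) unfolding is_poset_def by (auto dest: transpD reflpD)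
  show ?thesis unfolding odot_def interp_def divstar_def
    apply (simp add: up_def)
    apply (intro iffI conjI allI impI ballI)
    apply (simp_all add: rf)
    apply (meson tr)+
    done
qed

theorem fact5p14:
  fixes le :: "'w \<Rightarrow> 'w \<Rightarrow> bool"
  assumes "is_poset le"
    and "A \<in> Omega le w"
  shows "odot le w A = {z. le w z \<and> up le z - {z} \<subseteq> A}"
proof -
  have tr: "\<And>x y z. le x y \<Longrightarrow> le y z \<Longrightarrow> le x z"
    and an: "\<And>x y. le x y \<Longrightarrow> le y x \<Longrightarrow> x = y"
    and rf: "\<And>x. le x x"
    using assms(1) unfolding is_poset_def by (auto dest: transpD antisympD reflpD)
  show ?thesis
  proof (intro set_eqI iffI)
    fix z assume "z \<in> odot le w A"
    hence wz: "le w z" and H: "\<And>v T u. le z v \<Longrightarrow> T \<in> Omega le v \<Longrightarrow> v \<notin> T \<Longrightarrow> le v u \<Longrightarrow> u \<in> T \<Longrightarrow> u \<in> A"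
      unfolding odot_char[OF assms(1)] by blast+
    have "up le z - {z} \<subseteq> A"
    proof
      fix y assume y: "y \<in> up le z - {z}"
      hence zy: "le z y" "y \<noteq> z" by (auto simp: up_def)
      have uc: "upclosed le (up le y)" unfolding upclosed_def up_def using tr by blast
      hence T: "up le y \<inter> up le z \<in> Omega le z" unfolding Omega_def by blast
      have "z \<notin> up le y \<inter> up le z" using zy an by (auto simp: up_def)
      moreover have "y \<in> up le y \<inter> up le z" using zy rf by (auto simp: up_def)
      ultimately show "y \<in> A" using H[OF rf T _ zy(1)] by blast
    qed
    thus "z \<in> {z. le w z \<and> up le z - {z} \<subseteq> A}" using wz by blast
  next
    fix z assume "z \<in> {z. le w z \<and> up le z - {z} \<subseteq> A}"
    hence wz: "le w z" and S: "up le z - {z} \<subseteq> A" by auto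
    show "z \<in> odot le w A" unfolding odot_char[OF assms(1)]
    proof (intro conjI allI impI ballI wz)
      fix v T assume zv: "le z v" and "T \<in> Omega le v"
      show "v \<in> T \<or> (\<forall>u. le v u \<longrightarrow> u \<in> T \<longrightarrow> u \<in> A)"
      proof (cases "v \<in> T")
        case False
        have "u \<in> A" if "le v u" "u \<in> T" for u
        proof -
          have "u \<noteq> z"
          proof
            assume "u = z"
            hence "v = z" using an zv that(1) by blast
            thus False using False that \<open>u = z\<close> by simp
          qed
          thus ?thesis using S tr[OF zv that(1)] by (auto simp: up_def)
        qed
        thus ?thesis by blast
      qed simp
    qed
  qed
qed

end
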